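(* Let $n\ge 2$ be an integer, let $A$ be a complex Banach algebra, and let $p\in(0,1)$, $\theta\in[0,\infty)$ be real numbers. Suppose $f:A\to A$ satisfies $$\Big\|\mu f\Big(\frac{x+y}{2}\Big)+\mu f\Big(\frac{x-y}{2}\Big)-f(\mu x)+f(a^n)-\big(f(a)a^{n-1}+af(a)a^{n-2}+\cdots+a^{n-2}f(a)a+a^{n-1}f(a)\big)\Big\|\le \theta(\|x\|^p+\|y\|^p+\|a\|^p)$$ for all $\mu\in\mathbb{T}$ and all $x,y,a\in A$. Then there exists a unique $n$-Jordan derivation $D:A\to A$ such that $$\|f(x)-D(x)\|\le \frac{2^p\theta}{2-2^p}\|x\|^p$$ for all $x\in A$.
   Context: $\mathbb{T}=\{\mu\in\mathbb{C}:|\mu|=1\}$. For an integer $n\ge 2$, an $n$-Jordan derivation on an algebra $A$ is a linear map $D:A\to A$ such that $D(a^n)=D(a)a^{n-1}+aD(a)a^{n-2}+\cdots+a^{n-2}D(a)a+a^{n-1}D(a)$ for all $a\in A$. *)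

theory Defs
  imports Complex_Main
begin

text \<open>A complex Banach algebra is modelled as a real Banach algebra (type class
  real_normed_algebra + banach; no unit assumed) together with a complex scalar
  multiplication sc that extends the real one and is compatible with norm and product.\<close>

definition complex_scaling :: "(complex \<Rightarrow> 'a::{real_normed_algebra,banach} \<Rightarrow> 'a) \<Rightarrow> bool" where
  "complex_scaling sc \<longleftrightarrow>
     (\<forall>c d x. sc c (sc d x) = sc (c * d) x) \<and>
     (\<forall>c x y. sc c (x + y) = sc c x + sc c y) \<and>
     (\<forall>c d x. sc (c + d) x = sc c x + sc d x) \<and>
     (\<forall>r x. sc (complex_of_real r) x = scaleR r x) \<and>
     (\<forall>c x. norm (sc c x) = cmod c * norm x) \<and>
     (\<forall>c x y. sc c (x * y) = sc c x * y) \<and>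
     (\<forall>c x y. sc c (x * y) = x * sc c y)"

text \<open>lpow a k x = a^k x and rpow a k x = x a^k (with a^0 x = x), so no unit is needed.\<close>
fun lpow :: "'a::times \<Rightarrow> nat \<Rightarrow> 'a \<Rightarrow> 'a" where
  "lpow a 0 x = x"
| "lpow a (Suc k) x = a * lpow a k x"

fun rpow :: "'a::times \<Rightarrow> nat \<Rightarrow> 'a \<Rightarrow> 'a" where
  "rpow a 0 x = x"
| "rpow a (Suc k) x = rpow a k x * a"

text \<open>a^n for n >= 1\<close>
definition apow :: "'a::times \<Rightarrow> nat \<Rightarrow> 'a" where
  "apow a n = lpow a (n - 1) a"

definition jsum :: "('a::{times,comm_monoid_add} \<Rightarrow> 'a) \<Rightarrow> nat \<Rightarrow> 'a \<Rightarrow> 'a" where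
  "jsum D n a = (\<Sum>k<n. lpow a k (rpow a (n - 1 - k) (D a)))"

definition n_jordan_derivation ::
  "(complex \<Rightarrow> 'a::{real_normed_algebra,banach} \<Rightarrow> 'a) \<Rightarrow> nat \<Rightarrow> ('a \<Rightarrow> 'a) \<Rightarrow> bool" where
  "n_jordan_derivation sc n D \<longleftrightarrow>
     (\<forall>x y. D (x + y) = D x + D y) \<and>
     (\<forall>c x. D (sc c x) = sc c (D x)) \<and>
     (\<forall>a. D (apow a n) = jsum D n a)"

end

theory Submission
  imports Defs
begin


lemma cs_facts: assumes "complex_scaling sc"
  shows cs_mult: "sc c (sc d x) = sc (c * d) x"
    and cs_add: "sc c (x + y) = sc c x + sc c y"
    and cs_addc: "sc (c + d) x = sc c x + sc d x"
    and cs_real: "sc (complex_of_real r) x = r *\<^sub>R x"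
    and cs_norm: "norm (sc c x) = cmod c * norm x"
  using assms unfolding complex_scaling_def by blast+

lemma sc_lin:
  assumes cs: "complex_scaling sc"
  shows "bounded_linear (sc c)"
proof (rule bounded_linear_intro[where K="cmod c"])
  fix x y show "sc c (x + y) = sc c x + sc c y" using cs_add[OF cs] .
next
  fix r x
  have "sc c (r *\<^sub>R x) = sc c (sc (complex_of_real r) x)" using cs_real[OF cs] by simp
  also have "\<dots> = sc (c * complex_of_real r) x" using cs_mult[OF cs] .
  also have "\<dots> = sc (complex_of_real r * c) x" by (simp only: mult.commute)
  also have "\<dots> = sc (complex_of_real r) (sc c x)" using cs_mult[OF cs] by simp
  also have "\<dots> = r *\<^sub>R sc c x" using cs_real[OF cs] .
  finally show "sc c (r *\<^sub>R x) = r *\<^sub>R sc c x" .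
next
  fix x show "norm (sc c x) \<le> norm x * cmod c" using cs_norm[OF cs]
    by (simp add: mult.commute)
qed

lemma sc_one: assumes cs: "complex_scaling sc" shows "sc 1 x = x"
proof -
  have "sc (complex_of_real 1) x = 1 *\<^sub>R x" using cs unfolding complex_scaling_def by blast
  thus ?thesis by simp
qed

lemma sc_0: assumes cs: "complex_scaling sc" shows "sc c 0 = 0"
  using linear_0[OF bounded_linear.linear[OF sc_lin[OF cs]]] .

lemma sc_diff: assumes cs: "complex_scaling sc" shows "sc c (x - y) = sc c x - sc c y"
  using linear_diff[OF bounded_linear.linear[OF sc_lin[OF cs]]] .

lemma sc_scaleR: assumes cs: "complex_scaling sc" shows "sc c (r *\<^sub>R x) = r *\<^sub>R sc c x"
  using linear_scale[OF bounded_linear.linear[OF sc_lin[OF cs]]] .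

lemma lpow_scale_arg: "lpow a j (r *\<^sub>R z) = r *\<^sub>R lpow a j (z::'a::real_normed_algebra)"
  by (induction j) auto
lemma rpow_scale_arg: "rpow a j (r *\<^sub>R z) = r *\<^sub>R rpow a j (z::'a::real_normed_algebra)"
  by (induction j) auto
lemma lpow_scale_base: "lpow (r *\<^sub>R a) j z = r^j *\<^sub>R lpow a j (z::'a::real_normed_algebra)"
  by (induction j) auto
lemma rpow_scale_base: "rpow (r *\<^sub>R a) j z = r^j *\<^sub>R rpow a j (z::'a::real_normed_algebra)"
  by (induction j) (auto simp: mult.commute)
lemma lpow_zero: "lpow a j 0 = (0::'a::real_normed_algebra)"
  by (induction j) auto
lemma rpow_zero: "rpow a j 0 = (0::'a::real_normed_algebra)"
  by (induction j) auto
lemma lpow_zero_base: "lpow 0 (Suc j) z = (0::'a::real_normed_algebra)" by simp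
lemma rpow_zero_base: "rpow 0 (Suc j) z = (0::'a::real_normed_algebra)" by simp

lemma apow_scale: assumes "n \<ge> 1"
  shows "apow (t *\<^sub>R a) n = t^n *\<^sub>R apow (a::'a::real_normed_algebra) n"
proof -
  have "apow (t *\<^sub>R a) n = t^(n-1) *\<^sub>R (t *\<^sub>R lpow a (n-1) a)"
    unfolding apow_def by (simp add: lpow_scale_base lpow_scale_arg)
  also have "\<dots> = (t^(n-1) * t) *\<^sub>R lpow a (n-1) a" by simp
  also have "t^(n-1) * t = t^n"
  proof -
    have "Suc (n-1) = n" using assms by simp
    then show ?thesis by (metis power_Suc2)
  qed
  finally show ?thesis unfolding apow_def by simp
qed

lemma jsum_scale: assumes "n \<ge> 1" and h: "h (t *\<^sub>R a) = t *\<^sub>R G a"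
  shows "jsum h n (t *\<^sub>R a) = t^n *\<^sub>R jsum G n (a::'a::real_normed_algebra)"
  unfolding jsum_def scaleR_sum_right
proof (rule sum.cong[OF refl])
  fix k assume "k \<in> {..<n}"
  then have e: "k + (n - 1 - k) + 1 = n" by auto
  have "lpow (t *\<^sub>R a) k (rpow (t *\<^sub>R a) (n - 1 - k) (h (t *\<^sub>R a)))
     = (t^k * t^(n-1-k) * t) *\<^sub>R lpow a k (rpow a (n - 1 - k) (G a))"
    by (simp add: h lpow_scale_base lpow_scale_arg rpow_scale_base rpow_scale_arg)
  also have "t^k * t^(n-1-k) * t = t^n" by (subst e[symmetric]) (simp add: power_add)
  finally show "lpow (t *\<^sub>R a) k (rpow (t *\<^sub>R a) (n - 1 - k) (h (t *\<^sub>R a))) =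
         t ^ n *\<^sub>R lpow a k (rpow a (n - 1 - k) (G a))" .
qed

lemma jsum0: assumes "n \<ge> 2" shows "jsum h n (0::'a::real_normed_algebra) = 0"
  unfolding jsum_def
proof (rule sum.neutral, rule ballI)
  fix k assume "k \<in> {..<n}"
  show "lpow 0 k (rpow 0 (n - 1 - k) (h 0)) = 0"
  proof (cases k)
    case 0
    have "n - 1 - k = Suc (n-2)" using assms 0 by simp
    then show ?thesis using 0 by (simp add: rpow_zero_base)
  next
    case (Suc m) then show ?thesis by simp
  qed
qed

lemma apow0: "apow (0::'a::real_normed_algebra) n = 0"
  unfolding apow_def by (simp add: lpow_zero)

lemma lpow_tendsto: "X \<longlonglongrightarrow> L \<Longrightarrow> (\<lambda>k. lpow a j (X k)) \<longlonglongrightarrow> lpow a j (L::'a::real_normed_algebra)"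
  by (induction j) (auto intro: tendsto_mult tendsto_const)
lemma rpow_tendsto: "X \<longlonglongrightarrow> L \<Longrightarrow> (\<lambda>k. rpow a j (X k)) \<longlonglongrightarrow> rpow a j (L::'a::real_normed_algebra)"
  by (induction j) (auto intro: tendsto_mult tendsto_const)

lemma jsum_tendsto: "(\<lambda>k. G k a) \<longlonglongrightarrow> D a \<Longrightarrow> (\<lambda>k. jsum (G k) n a) \<longlonglongrightarrow> jsum D n (a::'a::real_normed_algebra)"
  unfolding jsum_def by (intro tendsto_sum lpow_tendsto rpow_tendsto)

lemma null_cmp: assumes "\<And>k. norm (X k) \<le> B * r^k" "0 \<le> r" "r < 1"
  shows "X \<longlonglongrightarrow> 0"
proof (rule tendsto_norm_zero_cancel, rule tendsto_sandwich[of "\<lambda>_. 0" _ _ "\<lambda>k. B * r^k"])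
  show "\<forall>\<^sub>F n in sequentially. 0 \<le> norm (X n)" by simp
  show "\<forall>\<^sub>F n in sequentially. norm (X n) \<le> B * r ^ n" using assms by simp
  show "(\<lambda>_. 0::real) \<longlonglongrightarrow> 0" by simp
  have "(\<lambda>k. r^k) \<longlonglongrightarrow> 0" using assms by (intro LIMSEQ_power_zero) simp
  then show "(\<lambda>k. B * r^k) \<longlonglongrightarrow> 0" using tendsto_mult_right_zero by blast
qed

lemma two_pow_powr: "((2::real)^j) powr p = (2 powr p)^j"
  by (induction j) (auto simp: powr_mult)


lemma two_units: assumes "cmod c \<le> 2"
  shows "\<exists>u v. cmod u = 1 \<and> cmod v = 1 \<and> c = u + v"
proof (cases "c = 0")
  case True then show ?thesis by (intro exI[of _ 1] exI[of _ "-1"]) auto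
next
  case False
  define t where "t = sqrt (4 / (cmod c)^2 - 1)"
  have cp: "cmod c > 0" using False by simp
  have t2: "t^2 = 4 / (cmod c)^2 - 1" unfolding t_def
  proof (intro real_sqrt_pow2)
    have "cmod c * cmod c \<le> 2 * 2" using assms by (intro mult_mono) auto
    then show "0 \<le> 4 / (cmod c)^2 - 1" using cp by (simp add: field_simps power2_eq_square)
  qed
  have s: "sqrt (1 + t^2) = 2 / cmod c"
  proof -
    have "1 + t^2 = (2 / cmod c)^2" using t2 cp by (simp add: power_divide)
    then show ?thesis using cp by simp
  qed
  have m: "cmod (1 + \<i> * complex_of_real s) = sqrt (1 + s^2)" for s
    by (simp add: cmod_def)
  have "cmod (c/2 * (1 + \<i> * complex_of_real t)) = 1"
    unfolding norm_mult m s using cp by simp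
  moreover have "cmod (c/2 * (1 + \<i> * complex_of_real (-t))) = 1"
    unfolding norm_mult m using s cp by simp
  moreover have "c = c/2 * (1 + \<i> * complex_of_real t) + c/2 * (1 + \<i> * complex_of_real (-t))"
    by (simp add: field_simps)
  ultimately show ?thesis by blast
qed


context
  fixes sc :: "complex \<Rightarrow> 'a::{real_normed_algebra,banach} \<Rightarrow> 'a"
    and f :: "'a \<Rightarrow> 'a" and n :: nat and p \<theta> :: real
  assumes cs: "complex_scaling sc"
    and n2: "n \<ge> 2"
    and p0: "0 < p" and p1: "p < 1" and th0: "0 \<le> \<theta>"
    and H: "\<And>\<mu> x y a. cmod \<mu> = 1 \<Longrightarrow>
       norm (sc \<mu> (f (scaleR (1/2) (x + y))) + sc \<mu> (f (scaleR (1/2) (x - y))) - f (sc \<mu> x)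
             + f (apow a n) - jsum f n a)
       \<le> \<theta> * (norm x powr p + norm y powr p + norm a powr p)"
begin

lemma f0: "f 0 = 0"
proof -
  have "norm (sc 1 (f (scaleR (1/2) (0 + 0))) + sc 1 (f (scaleR (1/2) (0 - 0))) - f (sc 1 0)
             + f (apow 0 n) - jsum f n 0) \<le> \<theta> * (norm (0::'a) powr p + norm (0::'a) powr p + norm (0::'a) powr p)"
    by (rule H) simp
  then have "norm (f 0 + f 0) \<le> 0"
    by (simp add: sc_one[OF cs] apow0 jsum0[OF n2])
  then have "f 0 + f 0 = 0" by simp
  then have "(1/2::real) *\<^sub>R (f 0 + f 0) = 0" by simp
  then show ?thesis by (simp add: scaleR_add_right[symmetric])
qed

lemma Hj: "cmod \<mu> = 1 \<Longrightarrow> norm (sc \<mu> (f ((1/2) *\<^sub>R (x + y))) + sc \<mu> (f ((1/2) *\<^sub>R (x - y))) - f (sc \<mu> x))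
   \<le> \<theta> * (norm x powr p + norm y powr p)"
  using H[of \<mu> x y 0] by (simp add: apow0 jsum0[OF n2] f0)

lemma Hn: "norm (f (apow a n) - jsum f n a) \<le> \<theta> * norm a powr p"
  using H[of 1 0 0 a] by (simp add: sc_one[OF cs] sc_0[OF cs] f0)

lemma step: "norm ((1/2) *\<^sub>R f (2 *\<^sub>R y) - f y) \<le> \<theta> * 2 powr p / 2 * norm y powr p"
proof -
  have "norm (sc 1 (f ((1/2) *\<^sub>R (2 *\<^sub>R y + 0))) + sc 1 (f ((1/2) *\<^sub>R (2 *\<^sub>R y - 0))) - f (sc 1 (2 *\<^sub>R y)))
   \<le> \<theta> * (norm (2 *\<^sub>R y) powr p + norm (0::'a) powr p)" by (rule Hj) simp
  then have "norm (f y + f y - f (2 *\<^sub>R y)) \<le> \<theta> * (2 powr p * norm y powr p)"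
    by (simp add: sc_one[OF cs] powr_mult)
  moreover have "(1/2) *\<^sub>R f (2 *\<^sub>R y) - f y = - ((1/2) *\<^sub>R (f y + f y - f (2 *\<^sub>R y)))"
    by (simp add: algebra_simps scaleR_2[symmetric])
  ultimately show ?thesis by simp
qed


definition "gg k x = (1 / 2^k) *\<^sub>R f ((2^k) *\<^sub>R x)"
definition "DD x = f x + (\<Sum>j. gg (Suc j) x - gg j x)"

lemma r_props: "0 \<le> 2 powr p / 2" "2 powr p / 2 < 1" "1 < 2 powr p"
proof -
  show "0 \<le> 2 powr p / 2" by simp
  have "2 powr p < 2 powr 1" using p1 by (intro powr_less_mono) auto
  then show "2 powr p / 2 < 1" by simp
  have "2 powr 0 < 2 powr p" using p0 by (intro powr_less_mono) auto
  then show "1 < 2 powr p" by simp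
qed

lemma norm_pow_scale: "norm (((2::real)^j) *\<^sub>R x) powr p = (2 powr p)^j * norm x powr p"
  by (simp add: powr_mult two_pow_powr)

lemma diff_bound: "norm (gg (Suc j) x - gg j x) \<le> (\<theta> * 2 powr p / 2 * norm x powr p) * (2 powr p / 2)^j"
proof -
  define y where "y = ((2::real)^j) *\<^sub>R x"
  have "gg (Suc j) x - gg j x = (1/2^j) *\<^sub>R ((1/2) *\<^sub>R f (2 *\<^sub>R y) - f y)"
    by (simp add: gg_def y_def scaleR_diff_right)
  then have "norm (gg (Suc j) x - gg j x) = (1/2^j) * norm ((1/2) *\<^sub>R f (2 *\<^sub>R y) - f y)"
    by simp
  also have "\<dots> \<le> (1/2^j) * (\<theta> * 2 powr p / 2 * norm y powr p)"
    by (intro mult_left_mono step) auto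
  also have "\<dots> = (\<theta> * 2 powr p / 2 * norm x powr p) * (2 powr p / 2)^j"
    unfolding y_def norm_pow_scale by (simp add: power_divide ac_simps)
  finally show ?thesis .
qed

lemma summ: "summable (\<lambda>j. gg (Suc j) x - gg j x)"
proof (rule summable_norm_cancel, rule summable_comparison_test')
  show "summable (\<lambda>j. (\<theta> * 2 powr p / 2 * norm x powr p) * (2 powr p / 2)^j)"
    using r_props by (intro summable_mult summable_geometric) simp
  show "norm (norm (gg (Suc j) x - gg j x)) \<le> (\<theta> * 2 powr p / 2 * norm x powr p) * (2 powr p / 2)^j" for j
    using diff_bound by simp
qed

lemma gg0: "gg 0 x = f x" by (simp add: gg_def)

lemma gg_lim: "(\<lambda>k. gg k x) \<longlonglongrightarrow> DD x"
proof -
  have e: "(\<lambda>k. gg k x) = (\<lambda>k. f x + (\<Sum>j<k. gg (Suc j) x - gg j x))"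
  proof
    fix k
    have t: "(\<Sum>j<k. gg (Suc j) x - gg j x) = gg k x - gg 0 x" by (rule sum_lessThan_telescope)
    show "gg k x = f x + (\<Sum>j<k. gg (Suc j) x - gg j x)" unfolding t gg0 by simp
  qed
  show ?thesis unfolding e DD_def by (intro tendsto_add tendsto_const summable_LIMSEQ summ)
qed

lemma DD_bound: "norm (f x - DD x) \<le> (2 powr p * \<theta>) / (2 - 2 powr p) * norm x powr p"
proof -
  define B where "B = \<theta> * 2 powr p / 2 * norm x powr p"
  define r where "r = 2 powr p / 2"
  have r: "0 \<le> r" "r < 1" using r_props unfolding r_def by auto
  have sg: "summable (\<lambda>j. B * r^j)" using r by (intro summable_mult summable_geometric) simp
  have db: "norm (gg (Suc j) x - gg j x) \<le> B * r^j" for j using diff_bound unfolding B_def r_def .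
  have sn: "summable (\<lambda>j. norm (gg (Suc j) x - gg j x))"
    by (rule summable_comparison_test'[OF sg]) (simp add: db)
  have "norm (f x - DD x) = norm (\<Sum>j. gg (Suc j) x - gg j x)" unfolding DD_def by simp
  also have "\<dots> \<le> (\<Sum>j. norm (gg (Suc j) x - gg j x))"
    by (rule summable_norm[OF sn])
  also have "\<dots> \<le> (\<Sum>j. B * r^j)"
    by (rule suminf_le[OF db sn sg])
  also have "\<dots> = B * (1 / (1 - r))"
  proof -
    have "(\<Sum>j. B * r^j) = B * (\<Sum>j. r^j)" using r by (intro suminf_mult summable_geometric) simp
    also have "(\<Sum>j. r^j) = 1 / (1 - r)" using r by (intro suminf_geometric) simp
    finally show ?thesis .
  qed
  also have "\<dots> = (2 powr p * \<theta>) / (2 - 2 powr p) * norm x powr p"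
  proof -
    have ne: "2 - 2 powr p \<noteq> 0" "2 powr p \<noteq> 2" using r_props by auto
    show ?thesis unfolding B_def r_def using ne by (simp add: field_simps)
  qed
  finally show ?thesis .
qed


lemma half_double: "(1/2::real) *\<^sub>R (a + a) = (a::'b::real_vector)"
proof -
  have "a + a = 2 *\<^sub>R a" by (simp add: scaleR_2)
  then show ?thesis by simp
qed

lemma DD_jensen: assumes mu: "cmod \<mu> = 1"
  shows "sc \<mu> (DD ((1/2) *\<^sub>R (x + y))) + sc \<mu> (DD ((1/2) *\<^sub>R (x - y))) - DD (sc \<mu> x) = 0"
proof -
  define e where "e k = sc \<mu> (gg k ((1/2) *\<^sub>R (x + y))) + sc \<mu> (gg k ((1/2) *\<^sub>R (x - y))) - gg k (sc \<mu> x)" for k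
  have L1: "e \<longlonglongrightarrow> sc \<mu> (DD ((1/2) *\<^sub>R (x + y))) + sc \<mu> (DD ((1/2) *\<^sub>R (x - y))) - DD (sc \<mu> x)"
    unfolding e_def by (intro tendsto_diff tendsto_add bounded_linear.tendsto[OF sc_lin[OF cs]] gg_lim)
  have b: "norm (e k) \<le> (\<theta> * (norm x powr p + norm y powr p)) * (2 powr p / 2)^k" for k
  proof -
    define X where "X = ((2::real)^k) *\<^sub>R x"
    define Y where "Y = ((2::real)^k) *\<^sub>R y"
    have 1: "gg k ((1/2) *\<^sub>R (x + y)) = (1/2^k) *\<^sub>R f ((1/2) *\<^sub>R (X + Y))"
      unfolding gg_def X_def Y_def by (simp add: scaleR_add_right mult.commute)
    have 2: "gg k ((1/2) *\<^sub>R (x - y)) = (1/2^k) *\<^sub>R f ((1/2) *\<^sub>R (X - Y))"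
      unfolding gg_def X_def Y_def by (simp add: scaleR_diff_right mult.commute)
    have 3: "gg k (sc \<mu> x) = (1/2^k) *\<^sub>R f (sc \<mu> X)"
      unfolding gg_def X_def by (simp add: sc_scaleR[OF cs])
    have "e k = (1/2^k) *\<^sub>R (sc \<mu> (f ((1/2) *\<^sub>R (X + Y))) + sc \<mu> (f ((1/2) *\<^sub>R (X - Y))) - f (sc \<mu> X))"
      unfolding e_def 1 2 3 by (simp add: sc_scaleR[OF cs] scaleR_add_right scaleR_diff_right)
    then have "norm (e k) = (1/2^k) * norm (sc \<mu> (f ((1/2) *\<^sub>R (X + Y))) + sc \<mu> (f ((1/2) *\<^sub>R (X - Y))) - f (sc \<mu> X))"
      by simp
    also have "\<dots> \<le> (1/2^k) * (\<theta> * (norm X powr p + norm Y powr p))"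
      by (intro mult_left_mono Hj mu) simp
    also have "\<dots> = (\<theta> * (norm x powr p + norm y powr p)) * (2 powr p / 2)^k"
      unfolding X_def Y_def norm_pow_scale by (simp add: power_divide algebra_simps add_divide_distrib)
    finally show ?thesis .
  qed
  have "e \<longlonglongrightarrow> 0" by (rule null_cmp[OF b]) (use r_props in auto)
  then show ?thesis using L1 LIMSEQ_unique by blast
qed

lemma DD_add: "DD (u + v) = DD u + DD v"
proof -
  have "sc 1 (DD ((1/2) *\<^sub>R ((u + v) + (u - v)))) + sc 1 (DD ((1/2) *\<^sub>R ((u + v) - (u - v)))) - DD (sc 1 (u + v)) = 0"
    by (rule DD_jensen) simp
  moreover have "(1/2::real) *\<^sub>R ((u + v) + (u - v)) = u"
  proof -
    have "(u + v) + (u - v) = u + u" by (simp add: algebra_simps)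
    then show ?thesis by (simp add: half_double)
  qed
  moreover have "(1/2::real) *\<^sub>R ((u + v) - (u - v)) = v"
  proof -
    have "(u + v) - (u - v) = v + v" by (simp add: algebra_simps)
    then show ?thesis by (simp add: half_double)
  qed
  ultimately show ?thesis by (simp add: sc_one[OF cs] algebra_simps)
qed

lemma DD0: "DD 0 = 0"
  using DD_add[of 0 0] by simp

lemma DD_unit: assumes "cmod \<mu> = 1" shows "DD (sc \<mu> x) = sc \<mu> (DD x)"
proof -
  have "sc \<mu> (DD ((1/2) *\<^sub>R (x + x))) + sc \<mu> (DD ((1/2) *\<^sub>R (x - x))) - DD (sc \<mu> x) = 0"
    by (rule DD_jensen[OF assms])
  then show ?thesis by (simp add: half_double DD0 sc_0[OF cs])
qed

lemma DD_nat: "DD (real m *\<^sub>R x) = real m *\<^sub>R DD x"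
proof (induction m)
  case 0 then show ?case by (simp add: DD0)
next
  case (Suc m)
  have "real (Suc m) *\<^sub>R x = x + real m *\<^sub>R x" by (simp add: algebra_simps)
  then show ?case using Suc by (simp add: DD_add algebra_simps)
qed

lemma DD_small: assumes "cmod c \<le> 2" shows "DD (sc c x) = sc c (DD x)"
proof -
  obtain u v where uv: "cmod u = 1" "cmod v = 1" "c = u + v" using two_units[OF assms] by blast
  have "DD (sc c x) = DD (sc u x + sc v x)" using uv cs_addc[OF cs] by simp
  also have "\<dots> = sc u (DD x) + sc v (DD x)" by (simp add: DD_add DD_unit uv)
  also have "\<dots> = sc c (DD x)" using uv cs_addc[OF cs] by simp
  finally show ?thesis .
qed

lemma DD_sc: "DD (sc c x) = sc c (DD x)"
proof -
  define M where "M = nat \<lceil>cmod c\<rceil> + 1"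
  have "M \<ge> 1" unfolding M_def by simp
  then have Mpos: "real M > 0" by simp
  have Mge: "cmod c \<le> real M" unfolding M_def by linarith
  define d where "d = c / of_nat M"
  have "cmod d = cmod c / real M" unfolding d_def by (simp add: norm_divide)
  also have "\<dots> \<le> 1" using Mpos Mge by simp
  finally have d2: "cmod d \<le> 2" by simp
  have cd: "c = complex_of_real (real M) * d" unfolding d_def using Mpos by simp
  have "sc c x = real M *\<^sub>R sc d x" unfolding cd cs_mult[OF cs, symmetric] cs_real[OF cs] ..
  then have "DD (sc c x) = real M *\<^sub>R sc d (DD x)" by (simp add: DD_nat DD_small[OF d2])
  also have "\<dots> = sc c (DD x)" unfolding cd cs_mult[OF cs, symmetric] cs_real[OF cs] ..
  finally show ?thesis .
qed


lemma DD_jordan: "DD (apow a n) = jsum DD n a"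
proof -
  have n1: "n \<ge> 1" using n2 by simp
  define e where "e k = gg (k*n) (apow a n) - jsum (gg k) n a" for k
  have L: "e \<longlonglongrightarrow> DD (apow a n) - jsum DD n a"
  proof -
    have sm: "strict_mono (\<lambda>k. k*n)" using n1 by (intro strict_monoI) simp
    have "(\<lambda>k. gg (k*n) (apow a n)) \<longlonglongrightarrow> DD (apow a n)"
      using LIMSEQ_subseq_LIMSEQ[OF gg_lim sm] by (simp add: o_def)
    moreover have "(\<lambda>k. jsum (gg k) n a) \<longlonglongrightarrow> jsum DD n a" by (rule jsum_tendsto[where G=gg and D=DD, OF gg_lim])
    ultimately show ?thesis unfolding e_def by (rule tendsto_diff)
  qed
  have b: "norm (e k) \<le> (\<theta> * norm a powr p) * (2 powr p / 2)^k" for k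
  proof -
    define t where "t = (2::real)^k"
    have tp: "t \<ge> 1" by (simp add: t_def)
    have fa: "f (t *\<^sub>R a) = t *\<^sub>R gg k a" unfolding gg_def t_def by simp
    have fb: "f (t^n *\<^sub>R b) = t^n *\<^sub>R gg (k*n) b" for b unfolding gg_def t_def by (simp add: power_mult)
    have "f (apow (t *\<^sub>R a) n) - jsum f n (t *\<^sub>R a) = t^n *\<^sub>R e k"
      unfolding apow_scale[OF n1] jsum_scale[where h=f and G="gg k", OF n1 fa] fb e_def by (simp add: scaleR_diff_right)
    then have "t^n * norm (e k) \<le> \<theta> * norm (t *\<^sub>R a) powr p" using Hn[of "t *\<^sub>R a"] tp by simp
    also have "norm (t *\<^sub>R a) powr p = (2 powr p)^k * norm a powr p" unfolding t_def by (rule norm_pow_scale)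
    finally have 1: "t^n * norm (e k) \<le> \<theta> * ((2 powr p)^k * norm a powr p)" .
    have "t \<le> t^n" using power_increasing[OF n1 tp] by simp
    then have "t * norm (e k) \<le> t^n * norm (e k)" by (intro mult_right_mono) auto
    with 1 have "t * norm (e k) \<le> \<theta> * ((2 powr p)^k * norm a powr p)" by linarith
    then have "norm (e k) \<le> \<theta> * ((2 powr p)^k * norm a powr p) / t" using tp by (simp add: field_simps)
    also have "\<dots> = (\<theta> * norm a powr p) * (2 powr p / 2)^k" unfolding t_def by (simp add: power_divide)
    finally show ?thesis .
  qed
  have "e \<longlonglongrightarrow> 0" by (rule null_cmp[OF b]) (use r_props in auto)
  then have "DD (apow a n) - jsum DD n a = 0" using L LIMSEQ_unique by blast
  then show ?thesis by simp
qed

lemma uniq: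
  assumes hD: "\<And>r x. D (r *\<^sub>R x) = r *\<^sub>R D x" and bD: "\<And>x. norm (f x - D x) \<le> K * norm x powr p"
    and hE: "\<And>r x. E (r *\<^sub>R x) = r *\<^sub>R E x" and bE: "\<And>x. norm (f x - E x) \<le> K * norm x powr p"
  shows "D x = E x"
proof -
  have b: "norm (D x - E x) \<le> (2 * K * norm x powr p) * (2 powr p / 2)^k" for k
  proof -
    define t where "t = (2::real)^k"
    have tp: "t > 0" by (simp add: t_def)
    have "D x - E x = (1/t) *\<^sub>R (D (t *\<^sub>R x) - E (t *\<^sub>R x))" using tp by (simp add: hD hE scaleR_diff_right)
    then have "norm (D x - E x) = (1/t) * norm ((f (t *\<^sub>R x) - E (t *\<^sub>R x)) - (f (t *\<^sub>R x) - D (t *\<^sub>R x)))"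
      using tp by simp
    also have "\<dots> \<le> (1/t) * (norm (f (t *\<^sub>R x) - E (t *\<^sub>R x)) + norm (f (t *\<^sub>R x) - D (t *\<^sub>R x)))"
      using tp by (intro mult_left_mono norm_triangle_ineq4) auto
    also have "\<dots> \<le> (1/t) * (K * norm (t *\<^sub>R x) powr p + K * norm (t *\<^sub>R x) powr p)"
      using tp by (intro mult_left_mono add_mono bD bE) auto
    also have "norm (t *\<^sub>R x) powr p = (2 powr p)^k * norm x powr p" unfolding t_def by (rule norm_pow_scale)
    also have "(1/t) * (K * ((2 powr p)^k * norm x powr p) + K * ((2 powr p)^k * norm x powr p))
       = (2 * K * norm x powr p) * (2 powr p / 2)^k" unfolding t_def by (simp add: power_divide)
    finally show ?thesis .
  qed
  have "(\<lambda>k. D x - E x) \<longlonglongrightarrow> 0" by (rule null_cmp[OF b]) (use r_props in auto)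
  then show ?thesis by (simp add: LIMSEQ_const_iff)
qed

end

theorem corollary2p3:
  fixes sc :: "complex \<Rightarrow> 'a::{real_normed_algebra,banach} \<Rightarrow> 'a"
    and f :: "'a \<Rightarrow> 'a" and n :: nat and p \<theta> :: real
  assumes "complex_scaling sc"
    and "n \<ge> 2"
    and "0 < p" and "p < 1" and "0 \<le> \<theta>"
    and "\<And>\<mu> x y a. cmod \<mu> = 1 \<Longrightarrow>
       norm (sc \<mu> (f (scaleR (1/2) (x + y))) + sc \<mu> (f (scaleR (1/2) (x - y))) - f (sc \<mu> x)
             + f (apow a n) - jsum f n a)
       \<le> \<theta> * (norm x powr p + norm y powr p + norm a powr p)"
  shows "\<exists>!D. n_jordan_derivation sc n D \<and>
           (\<forall>x. norm (f x - D x) \<le> (2 powr p * \<theta>) / (2 - 2 powr p) * norm x powr p)"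
proof (rule ex1I[of _ "DD f"])
  note A = assms
  show "n_jordan_derivation sc n (DD f) \<and>
           (\<forall>x. norm (f x - DD f x) \<le> (2 powr p * \<theta>) / (2 - 2 powr p) * norm x powr p)"
    unfolding n_jordan_derivation_def
    using DD_add[OF A] DD_sc[OF A] DD_jordan[OF A] DD_bound[OF A] by blast
  fix D assume D: "n_jordan_derivation sc n D \<and>
           (\<forall>x. norm (f x - D x) \<le> (2 powr p * \<theta>) / (2 - 2 powr p) * norm x powr p)"
  have hD: "D (r *\<^sub>R x) = r *\<^sub>R D x" for r x
  proof -
    have "D (sc (complex_of_real r) x) = sc (complex_of_real r) (D x)"
      using D unfolding n_jordan_derivation_def by blast
    then show ?thesis using cs_real[OF A(1)] by simp
  qed
  have hE: "DD f (r *\<^sub>R x) = r *\<^sub>R DD f x" for r x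
    using DD_sc[OF A, of "complex_of_real r" x] cs_real[OF A(1)] by simp
  show "D = DD f"
  proof
    fix x show "D x = DD f x"
      by (rule uniq[OF A, where K="(2 powr p * \<theta>) / (2 - 2 powr p)"])
        (use hD hE D DD_bound[OF A] in auto)
  qed
qed

end
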